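(* Let $k\geq 2$ be an even integer, let $\Psi_k(x) = x^k - 2x^{k-1} - x^{k-2} - \cdots - x - 1$, and let $\gamma_1, \ldots, \gamma_k$ be the roots of $\Psi_k$ labeled so that $\gamma_1 > |\gamma_2| \geq |\gamma_3| \geq \cdots \geq |\gamma_k|$, where $\gamma_1$ is the unique root of $\Psi_k$ outside the unit circle. Then $$\frac{|\gamma_{k-1}|}{|\gamma_k|} > 1 + \frac{1}{k^{k^2}}.$$
   Context: It is known that $\Psi_k$ is irreducible over $\mathbb{Q}$ and has exactly one root outside the unit circle, which is real and greater than $1$; all other roots lie strictly inside the unit circle. For even $k$, $\gamma_k$ denotes the real root of $\Psi_k$ of smallest modulus in this labeling. *)

theory Defs
  imports "HOL-Computational_Algebra.Computational_Algebra"
begin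

definition Psi :: "nat \<Rightarrow> complex poly" where
  "Psi k = monom 1 k - smult 2 (monom 1 (k - 1)) - (\<Sum>i<k - 1. monom 1 i)"

end

theory Submission
  imports Defs
begin

lemma sin_ge_half:
  fixes x :: real assumes "0 \<le> x" "x \<le> pi/3" shows "x/2 \<le> sin x"
proof -
  let ?f = "\<lambda>x. sin x - x/2"
  have D: "\<And>u. \<lbrakk>0 \<le> u; u \<le> x\<rbrakk> \<Longrightarrow> (?f has_real_derivative cos u - 1/2) (at u)"
    by (auto intro!: derivative_eq_intros)
  have C: "\<And>u. \<lbrakk>0 \<le> u; u \<le> x\<rbrakk> \<Longrightarrow> cos u - 1/2 \<ge> 0"
  proof -
    fix u assume "0 \<le> u" "u \<le> x"
    then have "cos (pi/3) \<le> cos u" using assms by (intro cos_monotone_0_pi_le) auto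
    then show "cos u - 1/2 \<ge> 0" by (simp add: cos_60)
  qed
  have "?f 0 \<le> ?f x"
    apply (rule DERIV_nonneg_imp_nondecreasing[OF assms(1)])
    using D C by blast
  then show ?thesis by simp
qed

lemma one_minus_cos_ge:
  fixes t :: real assumes "0 \<le> t" "t \<le> 2*pi/3" shows "t^2/8 \<le> 1 - cos t"
proof -
  have c: "cos t = 1 - 2 * sin (t/2) ^ 2" using cos_double_sin[of "t/2"] by simp
  have "t/4 \<le> sin (t/2)" using sin_ge_half[of "t/2"] assms by simp
  moreover have "0 \<le> t/4" using assms by simp
  ultimately have "(t/4)^2 \<le> sin (t/2) ^ 2" by (rule power_mono)
  then show ?thesis unfolding c by (simp add: power_divide)
qed

lemma angle:
  fixes w :: complex and k :: nat
  assumes k: "k \<ge> 2" and eq: "w^(k+1) + 3*w^k + w^(k-1) = 1"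
  shows "w = of_real (cmod w) \<or> Re w \<le> cmod w * (1 - 1/(2*(real k+1)^2))"
proof -
  define s where "s = cmod w"
  define d where "d = Arg w"
  have w: "w = rcis s d" unfolding s_def d_def by (simp add: rcis_cmod_Arg)
  have "w \<noteq> 0" using eq k by (auto simp: power_0_left)
  then have s: "s > 0" unfolding s_def by simp
  have dB: "-pi < d" "d \<le> pi" unfolding d_def using Arg_correct[OF \<open>w \<noteq> 0\<close>] by auto
  have "Im (w^(k+1) + 3*w^k + w^(k-1)) = 0" using eq by simp
  then have im: "s^(k+1) * sin (real (k+1) * d) + 3 * (s^k * sin (real k * d)) + s^(k-1) * sin (real (k-1) * d) = 0"
    unfolding w DeMoivre2 by simp
  have main: "d = 0 \<or> pi/(real k+1) < \<bar>d\<bar>"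
  proof (rule ccontr)
    assume "\<not> ?thesis"
    then have d0: "d \<noteq> 0" and dle: "\<bar>d\<bar> \<le> pi/(real k+1)" by auto
    let ?e = "\<bar>d\<bar>"
    have e0: "0 < ?e" using d0 by simp
    have ke: "(real k+1) * ?e \<le> pi" using dle by (simp add: field_simps)
    have ke1: "real (k+1) * ?e \<le> pi" using ke by (simp add: add.commute)
    have ke2: "real k * ?e < pi" using ke e0 by (simp add: algebra_simps)
    have ke3: "real (k-1) * ?e \<le> pi" using ke2 e0 k by (simp add: of_nat_diff algebra_simps)
    have a1: "0 \<le> sin (real (k+1) * ?e)" using ke1 e0 by (intro sin_ge_zero) auto
    have a2: "0 < sin (real k * ?e)" using ke2 e0 k by (intro sin_gt_zero) auto
    have a3: "0 \<le> sin (real (k-1) * ?e)" using ke3 e0 k by (intro sin_ge_zero) auto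
    have pos: "0 < s^(k+1) * sin (real (k+1) * ?e) + 3 * (s^k * sin (real k * ?e)) + s^(k-1) * sin (real (k-1) * ?e)"
      using a1 a2 a3 s by (intro add_nonneg_pos add_pos_nonneg) auto
    show False
    proof (cases "d > 0")
      case True
      then have e: "?e = d" by simp
      show False using im pos[unfolded e] by simp
    next
      case False
      then have e: "?e = - d" by simp
      show False using im pos[unfolded e] by simp
    qed
  qed
  show ?thesis
  proof (cases "d = 0")
    case True
    then have "w = of_real s" using w by simp
    then show ?thesis unfolding s_def by simp
  next
    case False
    then have dd: "pi/(real k+1) < \<bar>d\<bar>" using main by simp
    have "cos d = cos \<bar>d\<bar>" by (simp add: abs_if)
    also have "\<dots> \<le> cos (pi/(real k+1))" using dd dB by (intro cos_monotone_0_pi_le) auto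
    finally have c1: "cos d \<le> cos (pi/(real k+1))" .
    have "pi/(real k+1) \<le> 2*pi/3" using k by (simp add: field_simps)
    then have "(pi/(real k+1))^2/8 \<le> 1 - cos (pi/(real k+1))"
      by (intro one_minus_cos_ge) auto
    moreover have "1/(2*(real k+1)^2) \<le> (pi/(real k+1))^2/8"
    proof -
      have "2 \<le> pi" using pi_ge_two by simp
      then have "2*2 \<le> pi*pi" using mult_mono[of 2 pi 2 pi] by simp
      then have p9: "4 \<le> pi^2" by (simp add: power2_eq_square)
      have kp: "0 < (real k + 1)^2" by simp
      have "1/(2*(real k+1)^2) = (4/8)/(real k+1)^2" using kp by simp
      also have "\<dots> \<le> (pi^2/8)/(real k+1)^2" using p9 kp by (intro divide_right_mono) auto
      also have "\<dots> = (pi/(real k+1))^2/8" by (simp add: power_divide)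
      finally show ?thesis .
    qed
    ultimately have "cos d \<le> 1 - 1/(2*(real k+1)^2)" using c1 by linarith
    then have "s * cos d \<le> s * (1 - 1/(2*(real k+1)^2))" using s by (intro mult_left_mono) auto
    moreover have "Re w = s * cos d" by (subst w) simp
    ultimately show ?thesis unfolding s_def by simp
  qed
qed

lemma poly_Psi: "poly (Psi k) z = z^k - 2*z^(k-1) - (\<Sum>i<k-1. z^i)"
  by (simp add: Psi_def poly_monom poly_sum)

lemma poly_Psi_mult:
  assumes "k \<ge> 2"
  shows "poly (Psi k) z * (z - 1) = z^(k+1) - 3*z^k + z^(k-1) + 1"
proof -
  have g: "(\<Sum>i<k-1. z^i) * (z - 1) = z^(k-1) - 1" using power_diff_1_eq[of z "k-1"] by (simp add: mult.commute)
  have a: "z^k * z = z^(k+1)" by simp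
  have b: "z^(k-1) * z = z^k" using assms by (metis Suc_diff_1 le_trans one_le_numeral not_one_le_zero power_Suc2 less_one not_le)
  have "poly (Psi k) z * (z - 1) = z^k * z - z^k - 2*(z^(k-1)*z) + 2*z^(k-1) - (\<Sum>i<k-1. z^i) * (z - 1)"
    unfolding poly_Psi by (simp add: algebra_simps)
  also have "\<dots> = z^(k+1) - 3*z^k + z^(k-1) + 1" unfolding a b g by simp
  finally show ?thesis .
qed

lemma Psi_mult_poly:
  assumes "k \<ge> 2"
  shows "[:-1, 1:] * Psi k = monom 1 (k+1) - smult 3 (monom 1 k) + monom 1 (k-1) + 1"
proof -
  have "poly ([:-1, 1:] * Psi k) = poly (monom 1 (k+1) - smult 3 (monom 1 k) + monom 1 (k-1) + 1)"
  proof
    fix z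
    show "poly ([:-1, 1:] * Psi k) z = poly (monom 1 (k+1) - smult 3 (monom 1 k) + monom 1 (k-1) + 1) z"
      using poly_Psi_mult[OF assms, of z] by (simp add: poly_monom algebra_simps)
  qed
  then show ?thesis by (simp add: poly_eq_poly_eq_iff)
qed

lemma pderiv_root:
  assumes "k \<ge> 2" "poly (Psi k) x = 0"
  shows "poly (Psi k) x + (x - 1) * poly (pderiv (Psi k)) x
       = of_nat (k+1) * x^k - 3 * of_nat k * x^(k-1) + of_nat (k-1) * x^(k-2)"
proof -
  have "pderiv ([:-1, 1:] * Psi k) = Psi k + [:-1, 1:] * pderiv (Psi k)"
    unfolding pderiv_mult by (simp add: pderiv_pCons)
  moreover have "pderiv ([:-1, 1:] * Psi k) = monom (of_nat (k+1)) k - smult 3 (monom (of_nat k) (k-1)) + monom (of_nat (k-1)) (k-2)"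
    unfolding Psi_mult_poly[OF assms(1)] by (simp add: pderiv_add pderiv_diff pderiv_smult pderiv_monom numeral_2_eq_2)
  ultimately have "Psi k + [:-1, 1:] * pderiv (Psi k) = monom (of_nat (k+1)) k - smult 3 (monom (of_nat k) (k-1)) + monom (of_nat (k-1)) (k-2)"
    by simp
  then have "poly (Psi k + [:-1, 1:] * pderiv (Psi k)) x = poly (monom (of_nat (k+1)) k - smult 3 (monom (of_nat k) (k-1)) + monom (of_nat (k-1)) (k-2)) x"
    by simp
  then show ?thesis by (simp add: poly_monom algebra_simps)
qed

lemma root_w:
  assumes "k \<ge> 2" "even k" "poly (Psi k) z = 0"
  shows "(-z)^(k+1) + 3*(-z)^k + (-z)^(k-1) = 1"
proof -
  have "0 = z^(k+1) - 3*z^k + z^(k-1) + 1" using poly_Psi_mult[OF assms(1), of z] assms(3) by simp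
  moreover have "odd (k+1)" "odd (k-1)" using assms(1,2) by auto
  ultimately show ?thesis using assms(2) by (simp add: algebra_simps)
qed

lemma F_bounds:
  fixes w :: complex
  assumes k: "k \<ge> 2" and eq: "w^(k+1) + 3*w^k + w^(k-1) = 1"
  shows "cmod w^(k+1) + 3*cmod w^k + cmod w^(k-1) \<ge> 1"
    and "w \<noteq> of_real (cmod w) \<Longrightarrow> (cmod w^(k+1) + 3*cmod w^k + cmod w^(k-1))^2 \<ge> 1 + 3*cmod w^(2*k)/(real k+1)^2"
proof -
  obtain n where kn: "k = Suc n" using k by (cases k) auto
  define s where "s = cmod w"
  define g where "g = w^2 + 3*w + 1"
  have fac: "w^n * g = 1" using eq unfolding g_def kn by (simp add: algebra_simps power2_eq_square)
  have Fs: "s^(k+1) + 3*s^k + s^(k-1) = s^n * (s^2 + 3*s + 1)" unfolding kn by (simp add: algebra_simps power2_eq_square)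
  have nrm: "s^n * cmod g = 1" using arg_cong[OF fac, of cmod] unfolding s_def by (simp add: norm_mult norm_power)
  have "cmod g \<le> cmod (w^2 + 3*w) + cmod (1::complex)" unfolding g_def by (rule norm_triangle_ineq)
  also have "cmod (w^2 + 3*w) \<le> cmod (w^2) + cmod (3*w)" by (rule norm_triangle_ineq)
  finally have gle: "cmod g \<le> s^2 + 3*s + 1" unfolding s_def by (simp add: norm_mult norm_power)
  have s0: "0 \<le> s" unfolding s_def by simp
  have "s^n * cmod g \<le> s^n * (s^2 + 3*s + 1)" using gle s0 by (intro mult_left_mono) auto
  then show "cmod w^(k+1) + 3*cmod w^k + cmod w^(k-1) \<ge> 1" using Fs nrm unfolding s_def by simp
  assume nr: "w \<noteq> of_real (cmod w)"
  define x where "x = Re w"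
  define y where "y = Im w"
  have h: "s^2 = x^2 + y^2" unfolding s_def x_def y_def by (simp add: cmod_power2)
  have g2: "cmod g ^2 = (x^2 - y^2 + 3*x + 1)^2 + (2*x*y + 3*y)^2"
    unfolding cmod_power2 g_def x_def y_def by (simp add: power2_eq_square algebra_simps)
  have y2: "y^2 = s^2 - x^2" using h by simp
  have g3: "cmod g^2 = (2*x^2 - s^2 + 3*x + 1)^2 + (s^2 - x^2)*(2*x+3)^2"
    unfolding g2 h by (simp add: power2_eq_square algebra_simps)
  have key: "(s^2 + 3*s + 1)^2 - cmod g^2 = 6*((s^2+1)*(s-x)) + 4*(s^2-x^2)"
    unfolding g3 by (simp add: power2_eq_square algebra_simps)
  have xle: "x \<le> s * (1 - 1/(2*(real k+1)^2))" using angle[OF k eq] nr unfolding x_def s_def by auto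
  have kp: "0 < 2*(real k+1)^2" by simp
  have sx: "s - x \<ge> s / (2*(real k+1)^2)" using xle by (simp add: algebra_simps)
  have "\<bar>x\<bar> \<le> s" unfolding x_def s_def by (rule abs_Re_le_cmod)
  then have x2: "x^2 \<le> s^2" by (metis abs_le_square_iff abs_of_nonneg s0)
  have "s^2 - s + 1 = (s - 1/2)^2 + 3/4" by (simp add: power2_eq_square algebra_simps)
  moreover have "0 \<le> (s - 1/2)^2" by simp
  ultimately have s21: "s \<le> s^2 + 1" by linarith
  have inner: "6*((s^2+1)*(s-x)) \<ge> 3*s^2/(real k+1)^2"
  proof -
    have "0 \<le> s / (2*(real k+1)^2)" using s0 kp by simp
    then have m: "s * (s/(2*(real k+1)^2)) \<le> (s^2+1)*(s-x)" using s21 sx s0 by (intro mult_mono) auto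
    have e: "3*s^2/(real k+1)^2 = 6*(s * (s/(2*(real k+1)^2)))" by (simp add: power2_eq_square)
    have f: "6*(s * (s/(2*(real k+1)^2))) \<le> 6*((s^2+1)*(s-x))" using m by simp
    show ?thesis using e f by linarith
  qed
  have big: "(s^2 + 3*s + 1)^2 \<ge> cmod g^2 + 3*s^2/(real k+1)^2"
  proof -
    have "0 \<le> 4*(s^2-x^2)" using x2 by simp
    then show ?thesis using key inner by argo
  qed
  have "(s^n)^2 * (s^2 + 3*s + 1)^2 \<ge> (s^n)^2 * (cmod g^2 + 3*s^2/(real k+1)^2)"
    using big by (intro mult_left_mono) auto
  also have "(s^n)^2 * (cmod g^2 + 3*s^2/(real k+1)^2) = (s^n * cmod g)^2 + 3*((s^n)^2*s^2)/(real k+1)^2"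
    by (simp add: algebra_simps power_mult_distrib)
  also have "(s^n)^2*s^2 = s^(2*k)"
  proof -
    have "(s^n)^2 * s^2 = s^(n*2+2)" by (simp only: power_mult power_add)
    then show ?thesis by (simp add: kn mult.commute)
  qed
  also have "(s^n * cmod g) = 1" by (rule nrm)
  finally have "(s^n * (s^2 + 3*s + 1))^2 \<ge> 1 + 3*s^(2*k)/(real k+1)^2" by (simp add: power_mult_distrib)
  then show "(cmod w^(k+1) + 3*cmod w^k + cmod w^(k-1))^2 \<ge> 1 + 3*cmod w^(2*k)/(real k+1)^2"
    using Fs unfolding s_def by simp
qed

definition FF :: "nat \<Rightarrow> real \<Rightarrow> real" where
  "FF k s = s^(k+1) + 3*s^k + s^(k-1)"

lemma FF_less:
  assumes "k \<ge> 2" "0 \<le> a" "a < b" shows "FF k a < FF k b"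
proof -
  have "a^(k+1) < b^(k+1)" using assms by (intro power_strict_mono) auto
  moreover have "a^k \<le> b^k" using assms by (intro power_mono) auto
  moreover have "a^(k-1) \<le> b^(k-1)" using assms by (intro power_mono) auto
  ultimately show ?thesis unfolding FF_def by simp
qed

lemma FF_le:
  assumes "k \<ge> 2" "0 \<le> a" "a \<le> b" shows "FF k a \<le> FF k b"
  using FF_less[OF assms(1,2), of b] assms(3) by (cases "a = b") auto

lemma FF_scale:
  assumes "0 \<le> s" "1 \<le> l" shows "FF k (l*s) \<le> l^(k+1) * FF k s"
proof -
  have "l^k \<le> l^(k+1)" using assms by (intro power_increasing) auto
  moreover have "l^(k-1) \<le> l^(k+1)" using assms by (intro power_increasing) auto
  ultimately have "l^k * s^k \<le> l^(k+1) * s^k" "l^(k-1) * s^(k-1) \<le> l^(k+1) * s^(k-1)"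
    using assms by (simp_all add: mult_right_mono)
  then show ?thesis unfolding FF_def by (simp add: power_mult_distrib algebra_simps)
qed

lemma bern0:
  fixes e :: real assumes "0 \<le> e" "e \<le> 1" shows "(1+e)^n \<le> 1 + e*(2^n - 1)"
proof (induction n)
  case 0 then show ?case using assms by simp
next
  case (Suc n)
  have p: "(1::real) \<le> 2^n" by simp
  have "(1+e)^Suc n = (1+e)^n * (1+e)" by simp
  also have "\<dots> \<le> (1 + e*(2^n - 1)) * (1+e)" using Suc assms by (intro mult_right_mono) auto
  also have "\<dots> = 1 + e*2^n + e*(e*(2^n - 1))" by (simp add: algebra_simps)
  also have "\<dots> \<le> 1 + e*2^n + e*(2^n - 1)"
  proof -
    have "e*(e*(2^n - 1)) \<le> e*(2^n-1)" by (rule mult_left_le_one_le) (use assms p in auto)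
    then show ?thesis by simp
  qed
  also have "\<dots> = 1 + e * (2^Suc n - 1)" by (simp add: algebra_simps)
  finally show ?case .
qed

lemma bern:
  fixes e :: real assumes "0 \<le> e" "e \<le> 1" shows "(1+e)^n \<le> 1 + e*2^n"
  using bern0[OF assms, of n] assms by (simp add: algebra_simps)

lemma nat_ineq:
  fixes k :: nat assumes k: "k \<ge> 4" shows "625*(k+1)^2*4^(k+1) < 3*k^(k^2)"
proof -
  define X :: nat where "X = 4^(k+1)"
  have "(k+1) < 2^(k+1)" by (rule less_exp)
  then have "(k+1)^2 < (2^(k+1))^2" by (intro power_strict_mono) auto
  also have "(2^(k+1))^2 = (X::nat)" unfolding X_def using power_mult_distrib[of "2::nat" 2 "k+1"] by (simp add: power2_eq_square)
  finally have A: "(k+1)^2 < X" .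
  have "(4::nat)^(k^2) \<le> k^(k^2)" using k by (intro power_mono) auto
  moreover have "(4::nat)^(4*k) \<le> 4^(k^2)" using k by (intro power_increasing) (auto simp: power2_eq_square)
  moreover have "(4::nat)^(4*k) = X * X * 4^(2*k-2)"
  proof -
    have "4*k = (k+1) + (k+1) + (2*k-2)" using k by simp
    then have "(4::nat)^(4*k) = 4^((k+1) + (k+1) + (2*k-2))" by (simp only:)
    then show ?thesis unfolding X_def by (simp only: power_add)
  qed
  moreover have "(4::nat)^6 \<le> 4^(2*k-2)" using k by (intro power_increasing) auto
  ultimately have B: "X * X * 4096 \<le> k^(k^2)"
  proof -
    assume h1: "(4::nat)^(k^2) \<le> k^(k^2)" and h2: "(4::nat)^(4*k) \<le> 4^(k^2)"
      and h3: "(4::nat)^(4*k) = X * X * 4^(2*k-2)" and h4: "(4::nat)^6 \<le> 4^(2*k-2)"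
    have "X * X * 4096 = X * X * 4^6" by simp
    also have "\<dots> \<le> X * X * 4^(2*k-2)" using h4 by (rule mult_le_mono2)
    also have "\<dots> = 4^(4*k)" using h3 by simp
    also have "\<dots> \<le> k^(k^2)" using h1 h2 by linarith
    finally show ?thesis .
  qed
  have "625*(k+1)^2*X < 625 * X * X" using A by (simp add: X_def)
  also have "\<dots> \<le> 3 * (X * X * 4096)" by simp
  also have "\<dots> \<le> 3*k^(k^2)" using B by simp
  finally show ?thesis unfolding X_def .
qed

theorem lemma3p2:
  fixes k :: nat and \<gamma> :: "nat \<Rightarrow> complex"
  assumes "k \<ge> 2" and "even k"
    and roots: "mset (map \<gamma> [1..<k+1]) = proots (Psi k)"
    and first: "Im (\<gamma> 1) = 0" "Re (\<gamma> 1) > cmod (\<gamma> 2)"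
    and sorted: "\<And>i j. 2 \<le> i \<Longrightarrow> i \<le> j \<Longrightarrow> j \<le> k \<Longrightarrow> cmod (\<gamma> j) \<le> cmod (\<gamma> i)"
  shows "cmod (\<gamma> (k - 1)) / cmod (\<gamma> k) > 1 + 1 / real k ^ (k ^ 2)"
proof -
  note k = \<open>k \<ge> 2\<close>
  define p where "p = Psi k"
  define L where "L = [1..<k+1]"
  have pnz: "p \<noteq> 0"
  proof
    assume "p = 0"
    then have "map \<gamma> L = []" using roots unfolding p_def L_def by simp
    then show False using k unfolding L_def by simp
  qed
  have setr: "set (map \<gamma> L) = {x. poly p x = 0}"
    using arg_cong[OF roots, of set_mset] pnz unfolding p_def L_def by simp
  have rootg: "poly p (\<gamma> i) = 0" if "1 \<le> i" "i \<le> k" for i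
  proof -
    have "\<gamma> i \<in> \<gamma> ` set L" using that unfolding L_def by (intro imageI) auto
    then show ?thesis using setr by auto
  qed
  have wg: "(-\<gamma> i)^(k+1) + 3*(-\<gamma> i)^k + (-\<gamma> i)^(k-1) = 1" if "1 \<le> i" "i \<le> k" for i
    using root_w[OF k \<open>even k\<close>] rootg[OF that] unfolding p_def by simp
  have Fg: "FF k (cmod (\<gamma> i)) \<ge> 1" if "1 \<le> i" "i \<le> k" for i
    using F_bounds(1)[OF k wg[OF that]] unfolding FF_def by simp
  have Fg2: "(FF k (cmod (\<gamma> i)))^2 \<ge> 1 + 3*cmod (\<gamma> i)^(2*k)/(real k+1)^2"
    if "1 \<le> i" "i \<le> k" "-\<gamma> i \<noteq> of_real (cmod (\<gamma> i))" for i
    using F_bounds(2)[OF k wg[OF that(1,2)]] that(3) unfolding FF_def by simp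
  have Fr: "FF k (cmod (\<gamma> i)) = 1" if "1 \<le> i" "i \<le> k" "-\<gamma> i = of_real (cmod (\<gamma> i))" for i
  proof -
    have "(-\<gamma> i)^(k+1) + 3*(-\<gamma> i)^k + (-\<gamma> i)^(k-1) = of_real (FF k (cmod (\<gamma> i)))"
    proof -
      have "(-\<gamma> i)^(k+1) + 3*(-\<gamma> i)^k + (-\<gamma> i)^(k-1) = (of_real (cmod (\<gamma> i)))^(k+1) + 3*(of_real (cmod (\<gamma> i)))^k + (of_real (cmod (\<gamma> i)))^(k-1)"
        by (simp only: that(3))
      then show ?thesis unfolding FF_def by simp
    qed
    then show ?thesis using wg[OF that(1,2)] by (metis of_real_eq_1_iff)
  qed
  have F0: "FF k 0 = 0" using k unfolding FF_def by (simp add: power_0_left)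
  have F1: "FF k 1 = 5" unfolding FF_def by simp
  have cont: "\<forall>x. 0 \<le> x \<and> x \<le> 1 \<longrightarrow> isCont (FF k) x" unfolding FF_def by (auto intro!: continuous_intros)
  obtain \<rho> where r0: "0 \<le> \<rho>" and r1: "\<rho> \<le> 1" and Fr1: "FF k \<rho> = 1"
    using IVT[of "FF k" 0 1 1] F0 F1 cont by auto
  have rpos: "\<rho> > 0" using r0 Fr1 F0 by (cases "\<rho> = 0") auto
  have prho: "poly p (- of_real \<rho>) = 0"
  proof -
    have "poly p (- of_real \<rho>) * (- of_real \<rho> - 1) = 1 - ((of_real \<rho>)^(k+1) + 3*(of_real \<rho>)^k + (of_real \<rho>)^(k-1))"
      unfolding p_def poly_Psi_mult[OF k] using \<open>even k\<close> k by (simp add: algebra_simps)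
    also have "\<dots> = of_real (1 - FF k \<rho>)" unfolding FF_def by simp
    also have "\<dots> = 0" using Fr1 by simp
    finally show ?thesis using rpos by (simp add: complex_eq_iff)
  qed
  then have "- of_real \<rho> \<in> set (map \<gamma> L)" unfolding setr by simp
  then obtain i0 where i0L: "i0 \<in> set L" and i0g: "\<gamma> i0 = - of_real \<rho>" by auto
  then have i0: "1 \<le> i0" "i0 \<le> k" "\<gamma> i0 = - of_real \<rho>" unfolding L_def by auto
  have "i0 \<noteq> 1"
  proof
    assume "i0 = 1"
    then have "Re (\<gamma> 1) = - \<rho>" using i0 by simp
    then show False using first(2) rpos by (smt (verit) norm_ge_zero)
  qed
  then have "2 \<le> i0" using i0 by simp
  then have ale: "cmod (\<gamma> k) \<le> \<rho>" using sorted[of i0 k] i0 rpos by simp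
  have aeq: "cmod (\<gamma> k) = \<rho>"
  proof (rule ccontr)
    assume "cmod (\<gamma> k) \<noteq> \<rho>"
    then have "cmod (\<gamma> k) < \<rho>" using ale by simp
    then have "FF k (cmod (\<gamma> k)) < 1" using FF_less[OF k, of "cmod (\<gamma> k)" \<rho>] Fr1 by simp
    then show False using Fg[of k] k by simp
  qed
  have gk: "-\<gamma> k = of_real \<rho>"
  proof (rule ccontr)
    assume "-\<gamma> k \<noteq> of_real \<rho>"
    then have "(FF k \<rho>)^2 \<ge> 1 + 3*\<rho>^(2*k)/(real k+1)^2" using Fg2[of k] aeq k by simp
    moreover have "3*\<rho>^(2*k)/(real k+1)^2 > 0" using rpos by simp
    ultimately show False using Fr1 by simp
  qed
  have r5: "\<rho>^(k-1) \<ge> 1/5"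
  proof -
    have "\<rho>^2 \<le> 1" "\<rho> \<le> 1" using r1 r0 by (auto simp: power_le_one)
    then have "\<rho>^2 + 3*\<rho> + 1 \<le> 5" by simp
    moreover have "FF k \<rho> = \<rho>^(k-1) * (\<rho>^2 + 3*\<rho> + 1)"
      using k unfolding FF_def by (cases k) (auto simp: algebra_simps power2_eq_square)
    ultimately have "1 \<le> \<rho>^(k-1) * 5" using Fr1 r0 by (metis mult_left_mono zero_le_power)
    then show ?thesis by simp
  qed
  have rr: "\<rho> \<ge> 1/5"
  proof -
    have "\<rho>^(k-1) \<le> \<rho>^1" using r0 r1 k by (intro power_decreasing) auto
    then show ?thesis using r5 by simp
  qed
  show ?thesis
  proof (cases "k = 2")
    case True
    have t0: "Re (\<gamma> 1) > \<rho>" using first(2) aeq True by simp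
    define t where "t = Re (\<gamma> 1)"
    have g1: "\<gamma> 1 = of_real t" using first(1) unfolding t_def by (simp add: complex_eq_iff)
    have "poly (Psi 2) (\<gamma> 1) = 0" using rootg[of 1] True k unfolding p_def by simp
    then have "(\<gamma> 1)^2 - 2 * \<gamma> 1 - 1 = 0" by (simp add: poly_Psi)
    then have "(of_real t)^2 - 2 * of_real t - 1 = (0::complex)" unfolding g1 .
    then have "of_real (t^2 - 2 * t - 1) = (0::complex)" by simp
    then have teq: "(Re (\<gamma> 1))^2 - 2 * Re (\<gamma> 1) - 1 = 0" unfolding t_def by (simp only: of_real_eq_0_iff)
    have t2: "Re (\<gamma> 1) \<ge> 2"
    proof (rule ccontr)
      assume "\<not> ?thesis"
      then have "Re (\<gamma> 1) * (Re (\<gamma> 1) - 2) < 0" using t0 rpos by (intro mult_pos_neg) auto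
      then show False using teq by (simp add: power2_eq_square algebra_simps)
    qed
    have rh: "\<rho> < 1/2"
    proof (rule ccontr)
      assume "\<not> ?thesis"
      then have "FF k (1/2) \<le> FF k \<rho>" using FF_le[OF k, of "1/2" \<rho>] by simp
      then show False using Fr1 True unfolding FF_def by (simp add: power_divide power2_eq_square)
    qed
    have b2: "cmod (\<gamma> (k-1)) \<ge> 2" using True t2 abs_Re_le_cmod[of "\<gamma> 1"] by simp
    have "cmod (\<gamma> (k-1)) / cmod (\<gamma> k) \<ge> 2 / (1/2)"
      unfolding aeq using b2 rh rpos by (intro frac_le) auto
    moreover have "1 + 1 / real k ^ (k ^ 2) < 2 / (1/2)" using True by simp
    ultimately show ?thesis by linarith
  next
    case False
    then have k4: "k \<ge> 4" using k \<open>even k\<close> by presburger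
    define b where "b = cmod (\<gamma> (k-1))"
    have bge: "b \<ge> \<rho>" using sorted[of "k-1" k] k4 aeq unfolding b_def by simp
    have nreal: "-\<gamma> (k-1) \<noteq> of_real b"
    proof
      assume h: "-\<gamma> (k-1) = of_real b"
      then have "FF k b = 1" using Fr[of "k-1"] k4 unfolding b_def by simp
      then have "b = \<rho>" using FF_less[OF k, of \<rho> b] bge Fr1 r0 by (cases "b = \<rho>") auto
      then have eqg: "\<gamma> (k-1) = - of_real \<rho>" using h by (metis minus_minus)
      have gk': "\<gamma> k = - of_real \<rho>" using gk by (metis minus_minus)
      obtain j where kj: "k = Suc (Suc j)" using k by (metis add_2_eq_Suc le_Suc_ex)
      have "L = [1..<Suc j] @ [Suc j, Suc (Suc j)]" unfolding L_def kj by simp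
      then have "count (mset (map \<gamma> L)) (- of_real \<rho>) \<ge> 2"
        using eqg gk' unfolding kj by simp
      then have ord: "order (- of_real \<rho>) p \<ge> 2" using roots pnz unfolding L_def p_def by simp
      have "poly (pderiv p) (- of_real \<rho>) = 0"
      proof (cases "pderiv p = 0")
        case True then show ?thesis by simp
      next
        case False
        have "order (- of_real \<rho>) p = Suc (order (- of_real \<rho>) (pderiv p))"
          by (rule order_pderiv[OF pnz prho])
        then have "order (- of_real \<rho>) (pderiv p) \<noteq> 0" using ord by simp
        then show ?thesis using order_root by blast
      qed
      then have "(0::complex) = of_nat (k+1) * (- of_real \<rho>)^k - 3 * of_nat k * (- of_real \<rho>)^(k-1) + of_nat (k-1) * (- of_real \<rho>)^(k-2)"
        using pderiv_root[OF k, of "- of_real \<rho>"] prho unfolding p_def by simp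
      also have "\<dots> = (of_real (real (k+1) * \<rho>^k + 3 * real k * \<rho>^(k-1) + real (k-1) * \<rho>^(k-2)) :: complex)"
      proof -
        have "odd (k-1)" "even (k-2)" using \<open>even k\<close> k by auto
        then show ?thesis using \<open>even k\<close> by simp
      qed
      finally have "real (k+1) * \<rho>^k + 3 * real k * \<rho>^(k-1) + real (k-1) * \<rho>^(k-2) = 0"
        by (metis of_real_eq_0_iff)
      moreover have "real (k+1) * \<rho>^k > 0" using rpos by simp
      moreover have "3 * real k * \<rho>^(k-1) \<ge> 0" "real (k-1) * \<rho>^(k-2) \<ge> 0" using r0 by auto
      ultimately show False by linarith
    qed
    have Fb: "(FF k b)^2 \<ge> 1 + 3*b^(2*k)/(real k+1)^2"
      using Fg2[of "k-1"] k4 nreal unfolding b_def by simp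
    define E :: real where "E = 1 / real k ^ (k^2)"
    have E0: "0 < E" "E \<le> 1" using k unfolding E_def by auto
    show ?thesis
    proof (rule ccontr)
      assume "\<not> ?thesis"
      then have "b / \<rho> \<le> 1 + E" unfolding b_def E_def aeq by simp
      then have bl: "b \<le> (1+E) * \<rho>" using rpos by (simp add: divide_le_eq)
      have "FF k b \<le> FF k ((1+E) * \<rho>)" using FF_le[OF k _ bl] r0 bge by simp
      also have "\<dots> \<le> (1+E)^(k+1) * FF k \<rho>" using FF_scale[OF r0, of "1+E"] E0 by simp
      finally have Fbl: "FF k b \<le> (1+E)^(k+1)" using Fr1 by simp
      have Fbp: "0 \<le> FF k b" using bge r0 unfolding FF_def by simp
      have "(FF k b)^2 \<le> ((1+E)^(k+1))^2" using Fbl Fbp by (intro power_mono) auto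
      also have "\<dots> = (1+E)^(2*k+2)"
      proof -
        have e: "(k+1)*2 = 2*k+2" by simp
        show ?thesis by (simp only: power_mult[symmetric] e)
      qed
      also have "\<dots> \<le> 1 + E * 2^(2*k+2)" using bern[of E "2*k+2"] E0 by linarith
      finally have up: "(FF k b)^2 \<le> 1 + E * 2^(2*k+2)" .
      have "\<rho>^(2*k) = (\<rho>^(k-1))^2 * \<rho>^2"
        using k by (simp add: power_mult[symmetric] power_add[symmetric]) (cases k; simp add: algebra_simps)
      also have "\<dots> \<ge> (1/5)^2 * (1/5)^2" using r5 rr by (intro mult_mono power_mono) auto
      finally have r625: "\<rho>^(2*k) \<ge> 1/625" by (simp add: power_divide)
      have "b^(2*k) \<ge> \<rho>^(2*k)" using bge r0 by (intro power_mono) auto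
      then have "3*b^(2*k)/(real k+1)^2 \<ge> 3*(1/625)/(real k+1)^2" using r625
        by (intro divide_right_mono) auto
      with Fb up have "3*(1/625)/(real k+1)^2 \<le> E * 2^(2*k+2)" by linarith
      then have "3 \<le> 625 * (real k+1)^2 * (E * 2^(2*k+2))" by (simp add: field_simps)
      also have "\<dots> = 625 * (real k+1)^2 * 4^(k+1) / real k^(k^2)"
        unfolding E_def by (simp add: power_mult power_add)
      finally have "3 * real k^(k^2) \<le> 625 * (real k+1)^2 * 4^(k+1)" using k by (simp add: field_simps)
      then have "real (3 * k^(k^2)) \<le> real (625*(k+1)^2*4^(k+1))" by (simp add: add.commute[of "real k" 1])
      then have "3 * k^(k^2) \<le> 625*(k+1)^2*4^(k+1)" by (simp only: of_nat_le_iff)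
      then show False using nat_ineq[OF k4] by simp
    qed
  qed
qed

end
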